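(* Let $A=\prod_{i=1}^M\mathbb{Z}_{N_i}$ with each $N_i$ a prime power, let $\{t_i\}$ be numbers with $t_i\in\frac12\mathbb{Z}$ if $N_i$ is even and $t_i\in\mathbb{Z}$ if $N_i$ is odd, and let $\{p_{ij}\}_{i\neq j}$ be integers with $p_{ij}=p_{ji}$; set $p_{ii}=\lfloor t_i\rfloor$, $N_{ij}=\gcd(N_i,N_j)$, and $n_i=0$ if $t_i\in\mathbb{Z}$, $n_i=N_i/2$ if $t_i\in\frac12+\mathbb{Z}$. Consider the Abelian anyon theory $\mathcal{T}$ whose fusion group is the abelian group freely generated by elements $c_i,\varphi_i$ ($i=1,\dots,M$) subject only to $c_i^{N_i}=\varphi_i^{N_i}=1$, with exchange statistics determined (via $\theta(xy)=\theta(x)\theta(y)B_\theta(x,y)$, $B_\theta$ bimultiplicative and symmetric) by $\theta(c_i)=1$, $\theta(\varphi_i)=e^{2\pi i n_i/N_i^2}$, $B_\theta(c_i,c_j)=1$, $B_\theta(\varphi_i,c_j)=e^{2\pi i\delta_{ij}/N_i}$, $B_\theta(\varphi_i,\varphi_j)=1$ for $i\ne j$ (a stack of $M$ decoupled twisted quantum doubles). Define $a_i=\varphi_i\prod_{j=1}^{i}c_j^{p_{ji}N_j/N_{ij}}$. Then each $a_i$ has order $N_i$, the $a_i$ generate a subgroup isomorphic to $A$, and $$\theta(a_i)=e^{2\pi i t_i/N_i},\qquad B_\theta(a_i,a_j)=e^{2\pi i p_{ij}/N_{ij}}\ (i\neq j).$$ Hence the subtheory generated by $\{a_i\}$ is the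 Abelian anyon theory with fusion group $A$, generator statistics $t_i$ and mutual braidings $p_{ij}$; every Abelian anyon theory arises this way.
   Context: An Abelian anyon theory is a pair $(A,\theta)$ with $A$ a finite abelian group (anyon types under fusion) and $\theta:A\to U(1)$ the exchange statistics; the braiding phase is $B_\theta(a,b)=\theta(ab)/(\theta(a)\theta(b))$, required to be symmetric and bimultiplicative. Every Abelian anyon theory can be parameterized by a decomposition $A=\prod_i\mathbb{Z}_{N_i}$ into prime-power cyclic factors with generators $a_i$, $\theta(a_i)=e^{2\pi i t_i/N_i}$ ($t_i$ as stated) and $B_\theta(a_i,a_j)=e^{2\pi i p_{ij}/N_{ij}}$ for $i\ne j$. $\lfloor t\rfloor$ is the floor function. *)

theory Defs
  imports Complex_Main "HOL-Computational_Algebra.Primes"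
begin

text \<open>Elements of the fusion group of the stack of twisted quantum doubles,
  generated by c_i, phi_i (i < M) with c_i^{N_i} = phi_i^{N_i} = 1, are written
  additively as exponent vectors: an element (x, y) stands for
  prod_i c_i^{x i} phi_i^{y i}.  Two exponent vectors denote the same group
  element iff they agree componentwise modulo N_i for all i < M.\<close>

type_synonym elem = "(nat \<Rightarrow> int) \<times> (nat \<Rightarrow> int)"

definition el_add :: "elem \<Rightarrow> elem \<Rightarrow> elem" where
  "el_add g h = ((\<lambda>j. fst g j + fst h j), (\<lambda>j. snd g j + snd h j))"

definition el_neg :: "elem \<Rightarrow> elem" where
  "el_neg g = ((\<lambda>j. - fst g j), (\<lambda>j. - snd g j))"

definition el_zero :: elem where
  "el_zero = ((\<lambda>j. 0), (\<lambda>j. 0))"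

definition el_smult :: "int \<Rightarrow> elem \<Rightarrow> elem" where
  "el_smult k g = ((\<lambda>j. k * fst g j), (\<lambda>j. k * snd g j))"

definition el_comb :: "nat \<Rightarrow> (nat \<Rightarrow> int) \<Rightarrow> (nat \<Rightarrow> elem) \<Rightarrow> elem" where
  "el_comb M k g = ((\<lambda>j. \<Sum>i<M. k i * fst (g i) j), (\<lambda>j. \<Sum>i<M. k i * snd (g i) j))"

definition el_eq :: "(nat \<Rightarrow> nat) \<Rightarrow> nat \<Rightarrow> elem \<Rightarrow> elem \<Rightarrow> bool" where
  "el_eq N M g h \<longleftrightarrow> (\<forall>j<M. fst g j mod int (N j) = fst h j mod int (N j)
                               \<and> snd g j mod int (N j) = snd h j mod int (N j))"

definition el_order :: "(nat \<Rightarrow> nat) \<Rightarrow> nat \<Rightarrow> elem \<Rightarrow> nat" where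
  "el_order N M g = (LEAST k. 0 < k \<and> el_eq N M (el_smult (int k) g) el_zero)"

definition cgen :: "nat \<Rightarrow> elem" where
  "cgen i = ((\<lambda>j. if j = i then 1 else 0), (\<lambda>j. 0))"

definition phigen :: "nat \<Rightarrow> elem" where
  "phigen i = ((\<lambda>j. 0), (\<lambda>j. if j = i then 1 else 0))"

definition braid :: "(elem \<Rightarrow> complex) \<Rightarrow> elem \<Rightarrow> elem \<Rightarrow> complex" where
  "braid \<theta> a b = \<theta> (el_add a b) / (\<theta> a * \<theta> b)"

text \<open>theta is an Abelian anyon theory on the fusion group prod_{i<M}(Z_{N_i} x Z_{N_i}):
  a well-defined U(1)-valued function, with B_theta symmetric (automatic here) and
  bimultiplicative, and theta(a^{-1}) = theta(a) (the standard anyon-theory condition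
  making theta a quadratic function, theta(a^k) = theta(a)^{k^2}).\<close>
definition anyon_theory :: "(nat \<Rightarrow> nat) \<Rightarrow> nat \<Rightarrow> (elem \<Rightarrow> complex) \<Rightarrow> bool" where
  "anyon_theory N M \<theta> \<longleftrightarrow>
     (\<forall>g h. el_eq N M g h \<longrightarrow> \<theta> g = \<theta> h) \<and>
     (\<forall>g. norm (\<theta> g) = 1) \<and>
     (\<forall>a b. braid \<theta> a b = braid \<theta> b a) \<and>
     (\<forall>a b c. braid \<theta> (el_add a b) c = braid \<theta> a c * braid \<theta> b c) \<and>
     (\<forall>a b c. braid \<theta> a (el_add b c) = braid \<theta> a b * braid \<theta> a c) \<and>
     (\<forall>a. \<theta> (el_neg a) = \<theta> a)"

definition ephase :: "real \<Rightarrow> complex" where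
  "ephase x = exp (2 * of_real pi * \<i> * of_real x)"

definition nvals :: "(nat \<Rightarrow> nat) \<Rightarrow> (nat \<Rightarrow> real) \<Rightarrow> nat \<Rightarrow> real" where
  "nvals N t i = (if t i \<in> \<int> then 0 else real (N i) / 2)"

definition pfull :: "(nat \<Rightarrow> real) \<Rightarrow> (nat \<Rightarrow> nat \<Rightarrow> int) \<Rightarrow> nat \<Rightarrow> nat \<Rightarrow> int" where
  "pfull t p i j = (if i = j then \<lfloor>t i\<rfloor> else p i j)"

text \<open>a_i = phi_i * prod_{j \<le> i} c_j^{p_ji N_j / N_ij} (indices start at 0).\<close>
definition agen :: "(nat \<Rightarrow> nat) \<Rightarrow> (nat \<Rightarrow> real) \<Rightarrow> (nat \<Rightarrow> nat \<Rightarrow> int) \<Rightarrow> nat \<Rightarrow> elem" where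
  "agen N t p i = ((\<lambda>j. if j \<le> i then pfull t p j i * int (N j div gcd (N i) (N j)) else 0),
                   (\<lambda>j. if j = i then 1 else 0))"

end

theory Submission
  imports Defs
begin


definition esum :: "nat set \<Rightarrow> (nat \<Rightarrow> elem) \<Rightarrow> elem" where
  "esum S g = ((\<lambda>j. \<Sum>i\<in>S. fst (g i) j), (\<lambda>j. \<Sum>i\<in>S. snd (g i) j))"

lemma esum_empty: "esum {} g = el_zero" by (simp add: esum_def el_zero_def)
lemma esum_insert: "finite S \<Longrightarrow> m \<notin> S \<Longrightarrow> esum (insert m S) g = el_add (g m) (esum S g)"
  by (simp add: esum_def el_add_def)

lemma add_zero: "el_add el_zero el_zero = el_zero" by (simp add: el_add_def el_zero_def)
lemma add_neg: "el_add a (el_neg a) = el_zero" by (simp add: el_add_def el_zero_def el_neg_def)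
lemma smult_Suc: "el_smult (int (Suc n)) a = el_add (el_smult (int n) a) a"
  by (auto simp: el_smult_def el_add_def fun_eq_iff algebra_simps)
lemma smult_0: "el_smult 0 a = el_zero" by (simp add: el_smult_def el_zero_def)
lemma smult_neg: "el_smult (- k) a = el_neg (el_smult k a)" by (simp add: el_smult_def el_neg_def)

lemma ephase_add: "ephase (a + b) = ephase a * ephase b"
  by (simp add: ephase_def distrib_left distrib_right exp_add[symmetric] algebra_simps)
lemma ephase_powi: "ephase a powi k = ephase (of_int k * a)"
  by (simp add: ephase_def exp_power_int algebra_simps)
lemma ephase_pow: "ephase a ^ n = ephase (of_nat n * a)"
  using ephase_powi[of a "int n"] by simp
lemma ephase_0: "ephase 0 = 1" by (simp add: ephase_def)
lemma ephase_sum: "finite S \<Longrightarrow> (\<Prod>k\<in>S. ephase (f k)) = ephase (\<Sum>k\<in>S. f k)"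
  by (induction S rule: finite_induct) (auto simp: ephase_0 ephase_add)

context
  fixes N :: "nat \<Rightarrow> nat" and M :: nat and \<theta> :: "elem \<Rightarrow> complex"
  assumes A: "anyon_theory N M \<theta>"
begin

lemma nz: "\<theta> g \<noteq> 0"
  using A unfolding anyon_theory_def by (metis norm_zero zero_neq_one)
lemma thadd: "\<theta> (el_add a b) = \<theta> a * \<theta> b * braid \<theta> a b"
  using nz[of a] nz[of b] by (simp add: braid_def)
lemma Bnz: "braid \<theta> a b \<noteq> 0"
  using nz by (simp add: braid_def)
lemma Bl: "braid \<theta> (el_add a b) c = braid \<theta> a c * braid \<theta> b c"
  using A unfolding anyon_theory_def by blast
lemma Br: "braid \<theta> a (el_add b c) = braid \<theta> a b * braid \<theta> a c"
  using A unfolding anyon_theory_def by blast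
lemma Bsym: "braid \<theta> a b = braid \<theta> b a"
  using A unfolding anyon_theory_def by blast
lemma thneg: "\<theta> (el_neg a) = \<theta> a"
  using A unfolding anyon_theory_def by blast
lemma theq: "el_eq N M g h \<Longrightarrow> \<theta> g = \<theta> h"
  using A unfolding anyon_theory_def by blast

lemma B0: "braid \<theta> el_zero b = 1"
proof -
  have "braid \<theta> el_zero b = braid \<theta> el_zero b * braid \<theta> el_zero b"
    using Bl[of el_zero el_zero b] by (simp add: add_zero)
  then show ?thesis using Bnz[of el_zero b] by simp
qed

lemma Bneg: "braid \<theta> (el_neg a) b = inverse (braid \<theta> a b)"
proof -
  have "1 = braid \<theta> a b * braid \<theta> (el_neg a) b"
    using Bl[of a "el_neg a" b] by (simp add: add_neg B0)
  then show ?thesis using Bnz[of a b] by (simp add: field_simps)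
qed

lemma Bsmult_nat: "braid \<theta> (el_smult (int n) a) b = braid \<theta> a b ^ n"
  by (induction n) (simp_all add: smult_0 B0 smult_Suc Bl del: of_nat_Suc)

lemma Bsmult: "braid \<theta> (el_smult k a) b = braid \<theta> a b powi k"
proof (cases "k \<ge> 0")
  case True
  then obtain n where "k = int n" using nonneg_eq_int by blast
  then show ?thesis by (simp add: Bsmult_nat)
next
  case False
  then obtain n where "k = - int n" by (metis minus_minus nonneg_eq_int neg_0_le_iff_le nle_le)
  then show ?thesis by (simp add: smult_neg Bneg Bsmult_nat power_int_minus)
qed

lemma Bsmult2: "braid \<theta> a (el_smult k b) = braid \<theta> a b powi k"
  using Bsmult[of k b a] Bsym by metis

lemma th0: "\<theta> el_zero = 1"
proof -
  have "\<theta> el_zero = \<theta> el_zero * \<theta> el_zero * braid \<theta> el_zero el_zero"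
    using thadd[of el_zero el_zero] by (simp add: add_zero)
  then show ?thesis using nz[of el_zero] by (simp add: B0)
qed

lemma Bself: "braid \<theta> a a = \<theta> a ^ 2"
proof -
  have "1 = \<theta> a * \<theta> a * braid \<theta> a (el_neg a)"
    using thadd[of a "el_neg a"] by (simp add: add_neg th0 thneg)
  moreover have "braid \<theta> a (el_neg a) = inverse (braid \<theta> a a)"
    using Bneg Bsym by metis
  ultimately show ?thesis using Bnz[of a a] by (simp add: field_simps power2_eq_square)
qed

lemma thsmult_nat: "\<theta> (el_smult (int n) a) = \<theta> a ^ (n^2)"
proof (induction n)
  case 0 then show ?case by (simp add: smult_0 th0)
next
  case (Suc n)
  have "\<theta> (el_smult (int (Suc n)) a) = \<theta> a ^ (n^2) * \<theta> a * (\<theta> a ^ 2) ^ n"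
    by (simp only: smult_Suc thadd Suc Bsmult_nat Bself)
  also have "\<dots> = \<theta> a ^ ((Suc n)^2)"
    by (simp add: power_add[symmetric] power_mult[symmetric] power2_eq_square algebra_simps)
  finally show ?case .
qed

lemma thsmult: "\<theta> (el_smult k a) = \<theta> a ^ (nat \<bar>k\<bar>^2)"
proof (cases "k \<ge> 0")
  case True
  then obtain n where "k = int n" using nonneg_eq_int by blast
  then show ?thesis by (simp add: thsmult_nat)
next
  case False
  then obtain n where "k = - int n" by (metis minus_minus nonneg_eq_int neg_0_le_iff_le nle_le)
  then show ?thesis by (simp add: smult_neg thneg thsmult_nat)
qed

lemma Besum: "finite S \<Longrightarrow> braid \<theta> (esum S g) b = (\<Prod>i\<in>S. braid \<theta> (g i) b)"
  by (induction S rule: finite_induct) (simp_all add: esum_empty esum_insert B0 Bl)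

lemma thesum: "finite S \<Longrightarrow> (\<forall>i\<in>S. \<forall>j\<in>S. i \<noteq> j \<longrightarrow> braid \<theta> (g i) (g j) = 1)
   \<Longrightarrow> \<theta> (esum S g) = (\<Prod>i\<in>S. \<theta> (g i))"
proof (induction S rule: finite_induct)
  case empty then show ?case by (simp add: esum_empty th0)
next
  case (insert m S)
  have "braid \<theta> (g m) (esum S g) = 1"
    using Bsym Besum[OF insert(1)] insert(2,4) by (metis (no_types, lifting) insertCI prod.neutral)
  then show ?case using insert by (simp add: esum_insert thadd)
qed

end


definition blk :: "elem \<Rightarrow> nat \<Rightarrow> elem" where
  "blk g k = el_add (el_smult (fst g k) (cgen k)) (el_smult (snd g k) (phigen k))"

definition Qf :: "(nat \<Rightarrow> nat) \<Rightarrow> (nat \<Rightarrow> real) \<Rightarrow> nat \<Rightarrow> elem \<Rightarrow> real" where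
  "Qf N t M g = (\<Sum>k<M. of_int (snd g k)^2 * nvals N t k / real (N k)^2
                        + of_int (fst g k) * of_int (snd g k) / real (N k))"

lemma trunc: "el_eq N M g (esum {..<M} (blk g))"
  unfolding el_eq_def esum_def blk_def el_add_def el_smult_def cgen_def phigen_def
  by (auto simp: sum.delta if_distrib[of "\<lambda>x. a * x" for a] cong: if_cong)

context
  fixes M :: nat and N :: "nat \<Rightarrow> nat" and t :: "nat \<Rightarrow> real" and \<theta> :: "elem \<Rightarrow> complex"
  assumes anyon: "anyon_theory N M \<theta>"
    and th_c: "\<forall>i<M. \<theta> (cgen i) = 1"
    and th_phi: "\<forall>i<M. \<theta> (phigen i) = ephase (nvals N t i / real (N i) ^ 2)"
    and B_cc: "\<forall>i<M. \<forall>j<M. i \<noteq> j \<longrightarrow> braid \<theta> (cgen i) (cgen j) = 1"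
    and B_phic: "\<forall>i<M. \<forall>j<M. braid \<theta> (phigen i) (cgen j)
                   = ephase ((if i = j then 1 else 0) / real (N i))"
    and B_phiphi: "\<forall>i<M. \<forall>j<M. i \<noteq> j \<longrightarrow> braid \<theta> (phigen i) (phigen j) = 1"
begin

lemma cross: "i < M \<Longrightarrow> j < M \<Longrightarrow> i \<noteq> j \<Longrightarrow> braid \<theta> (blk g i) (blk g j) = 1"
proof -
  assume h: "i < M" "j < M" "i \<noteq> j"
  have 1: "braid \<theta> (cgen i) (phigen j) = 1"
    using B_phic h Bsym[OF anyon] by (metis ephase_0 div_0)
  have 2: "braid \<theta> (phigen i) (cgen j) = 1"
    using B_phic h by (simp add: ephase_0)
  show ?thesis unfolding blk_def
    using h 1 2 B_cc B_phiphi
    by (simp add: Bl[OF anyon] Br[OF anyon] Bsmult[OF anyon] Bsmult2[OF anyon])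
qed

lemma thblk: "k < M \<Longrightarrow> \<theta> (blk g k) = ephase (of_int (snd g k)^2 * nvals N t k / real (N k)^2
                        + of_int (fst g k) * of_int (snd g k) / real (N k))"
proof -
  assume k: "k < M"
  have cp: "braid \<theta> (cgen k) (phigen k) = ephase (1 / real (N k))"
    using B_phic k Bsym[OF anyon] by (metis)
  have e: "real (nat \<bar>snd g k\<bar>^2) = of_int (snd g k)^2" by simp
  have "\<theta> (blk g k) = \<theta> (phigen k) ^ (nat \<bar>snd g k\<bar>^2) * (braid \<theta> (cgen k) (phigen k) powi fst g k) powi snd g k"
    unfolding blk_def using k th_c
    by (simp add: thadd[OF anyon] thsmult[OF anyon] Bsmult[OF anyon] Bsmult2[OF anyon])
  also have "\<dots> = ephase (of_int (snd g k)^2 * nvals N t k / real (N k)^2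
                        + of_int (fst g k) * of_int (snd g k) / real (N k))"
    using k th_phi cp by (simp add: ephase_pow ephase_powi ephase_add e algebra_simps)
  finally show ?thesis .
qed

lemma closed: "\<theta> g = ephase (Qf N t M g)"
proof -
  have "\<theta> g = \<theta> (esum {..<M} (blk g))" using theq[OF anyon trunc] .
  also have "\<dots> = (\<Prod>k<M. \<theta> (blk g k))"
    using thesum[OF anyon, of "{..<M}" "blk g"] cross by simp
  also have "\<dots> = (\<Prod>k<M. ephase (of_int (snd g k)^2 * nvals N t k / real (N k)^2
                        + of_int (fst g k) * of_int (snd g k) / real (N k)))"
    by (rule prod.cong) (simp_all add: thblk)
  also have "\<dots> = ephase (Qf N t M g)" by (simp add: ephase_sum Qf_def)
  finally show ?thesis .
qed

end


lemma key_dvd_nat: fixes N :: "nat \<Rightarrow> nat" shows "N j dvd N i * (N j div gcd (N i) (N j))"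
proof -
  have "N i * (N j div gcd (N i) (N j)) = (N i * N j) div gcd (N i) (N j)"
    using div_mult_swap[OF gcd_dvd2[of "N i" "N j"], of "N i"] by simp
  also have "\<dots> = N j * (N i div gcd (N i) (N j))"
    using div_mult_swap[OF gcd_dvd1[of "N i" "N j"], of "N j"] by (simp add: mult.commute)
  finally show ?thesis by simp
qed

lemma key_dvd: fixes N :: "nat \<Rightarrow> nat" shows "int (N j) dvd int (N i) * int (N j div gcd (N i) (N j))"
  using key_dvd_nat[of N j i] by (simp only: of_nat_mult[symmetric] int_dvd_int_iff)

lemma agen_dvd: "int (N j) dvd int (N i) * fst (agen N t p i) j"
  unfolding agen_def using key_dvd[of N j i]
  by (auto simp: mult.left_commute[of "int (N i)"])

lemma half_lemma:
  fixes x :: real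
  assumes "2 * x \<in> \<int>" "x \<notin> \<int>"
  shows "x = of_int \<lfloor>x\<rfloor> + 1/2"
proof -
  obtain m where m: "2 * x = of_int m" using assms(1) Ints_cases by metis
  define d where "d = m - 2 * \<lfloor>x\<rfloor>"
  have dd: "real_of_int d = 2 * (x - of_int \<lfloor>x\<rfloor>)" using m by (simp add: d_def)
  have "0 \<le> x - of_int \<lfloor>x\<rfloor>" "x - of_int \<lfloor>x\<rfloor> < 1" by linarith+
  then have "real_of_int 0 \<le> real_of_int d" "real_of_int d < real_of_int 2" using dd by simp_all
  then have "0 \<le> d" "d < 2" by (simp_all only: of_int_le_iff of_int_less_iff)
  moreover have "d \<noteq> 0"
  proof
    assume "d = 0" then have "x = of_int \<lfloor>x\<rfloor>" using dd by simp
    then show False using assms(2) by (metis Ints_of_int)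
  qed
  ultimately have "d = 1" by linarith
  then show ?thesis using dd by simp
qed



theorem mainTheorem9:
  fixes M :: nat and N :: "nat \<Rightarrow> nat" and t :: "nat \<Rightarrow> real"
    and p :: "nat \<Rightarrow> nat \<Rightarrow> int" and \<theta> :: "elem \<Rightarrow> complex"
  assumes N_pp: "\<forall>i<M. \<exists>q e. prime q \<and> 0 < e \<and> N i = q ^ e"
    and t_even: "\<forall>i<M. even (N i) \<longrightarrow> 2 * t i \<in> \<int>"
    and t_odd: "\<forall>i<M. odd (N i) \<longrightarrow> t i \<in> \<int>"
    and p_sym: "\<forall>i<M. \<forall>j<M. i \<noteq> j \<longrightarrow> p i j = p j i"
    and anyon: "anyon_theory N M \<theta>"
    and th_c: "\<forall>i<M. \<theta> (cgen i) = 1"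
    and th_phi: "\<forall>i<M. \<theta> (phigen i) = ephase (nvals N t i / real (N i) ^ 2)"
    and B_cc: "\<forall>i<M. \<forall>j<M. i \<noteq> j \<longrightarrow> braid \<theta> (cgen i) (cgen j) = 1"
    and B_phic: "\<forall>i<M. \<forall>j<M. braid \<theta> (phigen i) (cgen j)
                   = ephase ((if i = j then 1 else 0) / real (N i))"
    and B_phiphi: "\<forall>i<M. \<forall>j<M. i \<noteq> j \<longrightarrow> braid \<theta> (phigen i) (phigen j) = 1"
  shows "(\<forall>i<M. el_order N M (agen N t p i) = N i)
       \<and> (\<forall>k :: nat \<Rightarrow> int. el_eq N M (el_comb M k (agen N t p)) el_zero
              \<longleftrightarrow> (\<forall>i<M. int (N i) dvd k i))
       \<and> (\<forall>i<M. \<theta> (agen N t p i) = ephase (t i / real (N i)))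
       \<and> (\<forall>i<M. \<forall>j<M. i \<noteq> j \<longrightarrow>
            braid \<theta> (agen N t p i) (agen N t p j) = ephase (real_of_int (p i j) / real (gcd (N i) (N j))))"
proof -
  let ?a = "agen N t p"
  have Npos: "N i > 0" if "i < M" for i
    using N_pp that by (metis prime_gt_0_nat zero_less_power)
  have cl: "\<theta> g = ephase (Qf N t M g)" for g
    by (rule closed[OF anyon th_c th_phi B_cc B_phic B_phiphi])
  have snd_a: "snd (?a i) j = (if j = i then 1 else 0)" for i j by (simp add: agen_def)
  have P1: "el_order N M (?a i) = N i" if i: "i < M" for i
    unfolding el_order_def
  proof (rule Least_equality)
    show "0 < N i \<and> el_eq N M (el_smult (int (N i)) (?a i)) el_zero"
    proof
      show "0 < N i" using Npos i .
      show "el_eq N M (el_smult (int (N i)) (?a i)) el_zero"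
        unfolding el_eq_def el_smult_def el_zero_def
        using agen_dvd[of N _ i t p] by (auto simp: snd_a)
    qed
  next
    fix k assume k: "0 < k \<and> el_eq N M (el_smult (int k) (?a i)) el_zero"
    then have "int k mod int (N i) = 0"
      using i unfolding el_eq_def el_smult_def el_zero_def by (force simp: snd_a)
    then have "N i dvd k" by (simp add: zmod_int[symmetric] dvd_eq_mod_eq_0)
    then show "N i \<le> k" using k by (simp add: dvd_imp_le)
  qed
  have P2: "el_eq N M (el_comb M k ?a) el_zero \<longleftrightarrow> (\<forall>i<M. int (N i) dvd k i)" for k
  proof -
    have sndc: "snd (el_comb M k ?a) j = k j" if "j < M" for j
      using that by (simp add: el_comb_def snd_a if_distrib[of "\<lambda>x. a * x" for a] cong: if_cong)
    show ?thesis
    proof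
      assume h: "el_eq N M (el_comb M k ?a) el_zero"
      show "\<forall>i<M. int (N i) dvd k i"
      proof (intro allI impI)
        fix i assume "i < M"
        then show "int (N i) dvd k i" using h sndc[of i] by (auto simp: el_eq_def el_zero_def)
      qed
    next
      assume h: "\<forall>i<M. int (N i) dvd k i"
      show "el_eq N M (el_comb M k ?a) el_zero"
        unfolding el_eq_def
      proof (intro allI impI conjI)
        fix j assume j: "j < M"
        have "int (N j) dvd k i * fst (?a i) j" if ii: "i \<in> {..<M}" for i
        proof -
          obtain c where "k i = int (N i) * c" using h ii by (meson dvd_def lessThan_iff)
          then have "k i * fst (?a i) j = c * (int (N i) * fst (?a i) j)" by simp
          then show ?thesis using agen_dvd[of N j i t p] by (metis dvd_mult)
        qed
        then have "int (N j) dvd fst (el_comb M k ?a) j"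
          unfolding el_comb_def by (simp, rule dvd_sum, simp)
        then show "fst (el_comb M k ?a) j mod int (N j) = fst el_zero j mod int (N j)"
          by (simp add: el_zero_def)
        show "snd (el_comb M k ?a) j mod int (N j) = snd el_zero j mod int (N j)"
          using sndc[OF j] h j by (simp add: el_zero_def)
      qed
    qed
  qed
  have P3: "\<theta> (?a i) = ephase (t i / real (N i))" if i: "i < M" for i
  proof -
    have x: "fst (?a i) i = \<lfloor>t i\<rfloor>" using Npos[OF i] by (simp add: agen_def pfull_def)
    have "Qf N t M (?a i) = (\<Sum>k<M. if k = i then nvals N t i / real (N i)^2 + of_int \<lfloor>t i\<rfloor> / real (N i) else 0)"
      unfolding Qf_def by (rule sum.cong) (auto simp: snd_a x)
    also have "\<dots> = nvals N t i / real (N i)^2 + of_int \<lfloor>t i\<rfloor> / real (N i)"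
      using i by simp
    also have "\<dots> = t i / real (N i)"
    proof (cases "t i \<in> \<int>")
      case True
      then show ?thesis by (auto simp: nvals_def elim!: Ints_cases)
    next
      case False
      then have "even (N i)" using t_odd i by blast
      then have "2 * t i \<in> \<int>" using t_even i by blast
      then have tt: "t i = of_int \<lfloor>t i\<rfloor> + 1/2" using half_lemma False by blast
      have "real (N i) > 0" using Npos[OF i] by simp
      have nv: "nvals N t i / real (N i)^2 = (1/2) / real (N i)"
        using False Npos[OF i] by (simp add: nvals_def power2_eq_square)
      have "nvals N t i / real (N i)^2 + of_int \<lfloor>t i\<rfloor> / real (N i) = (of_int \<lfloor>t i\<rfloor> + 1/2) / real (N i)"
        unfolding nv by (simp add: add_divide_distrib)
      also have "\<dots> = t i / real (N i)" using tt by metis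
      finally show ?thesis .
    qed
    finally show ?thesis using cl by simp
  qed
  have P4: "braid \<theta> (?a i) (?a j) = ephase (real_of_int (p i j) / real (gcd (N i) (N j)))"
    if i: "i < M" and j: "j < M" and ij: "i \<noteq> j" for i j
  proof -
    let ?x = "\<lambda>u v. real_of_int (fst (?a u) v)"
    have "Qf N t M (el_add (?a i) (?a j)) - Qf N t M (?a i) - Qf N t M (?a j)
        = (\<Sum>k<M. (if k = j then ?x i j / real (N j) else 0) + (if k = i then ?x j i / real (N i) else 0))"
      unfolding Qf_def sum_subtractf[symmetric]
      by (rule sum.cong) (auto simp: snd_a el_add_def ij field_simps power2_eq_square add_divide_distrib)
    also have "\<dots> = ?x i j / real (N j) + ?x j i / real (N i)"
      using i j by (simp add: sum.distrib)
    also have "\<dots> = real_of_int (p i j) / real (gcd (N i) (N j))"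
    proof (cases "i < j")
      case True
      have "?x j i = real_of_int (p i j) * (real (N i) / real (gcd (N j) (N i)))"
        using True by (simp add: agen_def pfull_def real_of_nat_div)
      then show ?thesis using True Npos[OF i] by (simp add: agen_def gcd.commute)
    next
      case False
      then have "j < i" using ij by simp
      have "?x i j = real_of_int (p j i) * (real (N j) / real (gcd (N i) (N j)))"
        using \<open>j < i\<close> by (simp add: agen_def pfull_def real_of_nat_div)
      then show ?thesis using \<open>j < i\<close> Npos[OF j] p_sym i j by (simp add: agen_def)
    qed
    finally have q: "Qf N t M (el_add (?a i) (?a j)) = Qf N t M (?a i) + Qf N t M (?a j)
                 + real_of_int (p i j) / real (gcd (N i) (N j))" by simp
    have "braid \<theta> (?a i) (?a j) = ephase (Qf N t M (el_add (?a i) (?a j))) / (ephase (Qf N t M (?a i)) * ephase (Qf N t M (?a j)))"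
      unfolding braid_def by (simp only: cl)
    also have "\<dots> = ephase (real_of_int (p i j) / real (gcd (N i) (N j)))"
      unfolding q ephase_add by (simp add: ephase_def)
    finally show ?thesis .
  qed
  show ?thesis using P1 P2 P3 P4 by blast
qed

end
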